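(* Let $\ell,n\in\mathbb{N}$, let $a_1<\dots<a_\ell$ be points of an open interval $I$, and let $n_1,\dots,n_\ell\in\mathbb{N}$ with $n_1+\dots+n_\ell=n$. Then for all $f\in\mathscr{C}^n(I)$ and $x\in I$, \[ f(x)=\sum_{\alpha=1}^\ell\sum_{\beta=0}^{n_\alpha-1}\bigg(f^{(\beta)}(a_\alpha)+\int_{a_\alpha}^x f^{(n)}(t)\,\frac{(a_\alpha-t)^{n-1-\beta}}{(n-1-\beta)!}\,dt\bigg)H_{\alpha,\beta}(x). \]
   Context: $\mathscr{C}^n(I)$ denotes the space of $n$ times continuously differentiable complex-valued functions on $I$. Let $\omega(x):=\prod_{i=1}^\ell(x-a_i)^{n_i}$. For $\alpha\in\{1,\dots,\ell\}$, $\beta\in\{0,\dots,n_\alpha-1\}$, the polynomial $H_{\alpha,\beta}$ is \[ H_{\alpha,\beta}(x):=\sum_{k=0}^{n_\alpha-1-\beta}\frac{\omega(x)}{\beta!\,k!\,(x-a_\alpha)^{n_\alpha-\beta-k}}\,g_\alpha^{(k)}(a_\alpha),\qquad g_\alpha(x):=\frac{(x-a_\alpha)^{n_\alpha}}{\omega(x)}=\prod_{i\ne\alpha}(x-a_i)^{-n_i}. \] (Equivalently, $H_{\alpha,\beta}$ is the unique polynomial of degree at most $n-1$ with $H_{\alpha,\beta}^{(j)}(a_i)=\delta_{i,\alpha}\delta_{j,\beta}$ for all $i\in\{1,\dots,\ell\}$, $j\in\{0,\dots,n_i-1\}$.) *)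

theory Defs
  imports "HOL-Analysis.Analysis"
begin

fun nderiv :: "nat \<Rightarrow> (real \<Rightarrow> 'a::real_normed_vector) \<Rightarrow> real \<Rightarrow> 'a" where
  "nderiv 0 f = f"
| "nderiv (Suc k) f = (\<lambda>x. vector_derivative (nderiv k f) (at x))"

definition Cn :: "nat \<Rightarrow> real set \<Rightarrow> (real \<Rightarrow> complex) \<Rightarrow> bool" where
  "Cn n I f \<longleftrightarrow>
     (\<forall>k<n. \<forall>x\<in>I. nderiv k f differentiable (at x)) \<and>
     (\<forall>k\<le>n. continuous_on I (nderiv k f))"

definition oint :: "real \<Rightarrow> real \<Rightarrow> (real \<Rightarrow> complex) \<Rightarrow> complex" where
  "oint a b g = (if a \<le> b then integral {a..b} g else - integral {b..a} g)"

definition gfun :: "nat \<Rightarrow> (nat \<Rightarrow> real) \<Rightarrow> (nat \<Rightarrow> nat) \<Rightarrow> nat \<Rightarrow> real \<Rightarrow> real" where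
  "gfun l a m \<alpha> x = (\<Prod>i\<in>{1..l}-{\<alpha>}. inverse ((x - a i) ^ m i))"

text \<open>H_{alpha,beta}(x); the quotient omega(x)/(x-a_alpha)^(n_alpha-beta-k) is written
  out as the polynomial (x-a_alpha)^(beta+k) * prod_{i ~= alpha} (x-a_i)^(n_i).\<close>
definition Hpoly :: "nat \<Rightarrow> (nat \<Rightarrow> real) \<Rightarrow> (nat \<Rightarrow> nat) \<Rightarrow> nat \<Rightarrow> nat \<Rightarrow> real \<Rightarrow> real" where
  "Hpoly l a m \<alpha> \<beta> x =
     (\<Sum>k=0..m \<alpha> - 1 - \<beta>.
        ((x - a \<alpha>) ^ (\<beta> + k) * (\<Prod>i\<in>{1..l}-{\<alpha>}. (x - a i) ^ m i))
        / (fact \<beta> * fact k) * nderiv k (gfun l a m \<alpha>) (a \<alpha>))"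

end

theory Submission
  imports Defs "HOL-Computational_Algebra.Polynomial"
begin

lemma pd_Suc: "(pderiv ^^ Suc j) p = (pderiv ^^ j) (pderiv p)"
  by (simp add: funpow_Suc_right del: funpow.simps)

lemma pd_add: "(pderiv ^^ j) (p + q) = (pderiv ^^ j) p + (pderiv ^^ j) q"
  by (induction j) (auto simp: pderiv_add)

lemma pd_smult: "(pderiv ^^ j) (smult c p) = smult c ((pderiv ^^ j) p)"
  by (induction j) (auto simp: pderiv_smult)

lemma pd_diff: "(pderiv ^^ j) (p - q) = (pderiv ^^ j) p - (pderiv ^^ (j::nat)) (q :: real poly)"
  by (induction j) (auto simp: pderiv_diff)

lemma pd_sum: "(pderiv ^^ j) (\<Sum>k\<in>A. p k) = (\<Sum>k\<in>A. (pderiv ^^ j) (p k))"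
  by (induction A rule: infinite_finite_induct) (auto simp: pd_add)

lemma pd_one: "(pderiv ^^ Suc j) 1 = 0"
  by (induction j) (auto simp: pderiv_1)

lemma pd_lin_power:
  "poly ((pderiv ^^ j) ([:-c,1:] ^ k)) (y::real) =
     (if j \<le> k then fact k / fact (k - j) * (y - c) ^ (k - j) else 0)"
proof (induction j arbitrary: k)
  case 0 then show ?case by (simp add: poly_power)
next
  case (Suc j)
  show ?case
  proof (cases k)
    case 0 then show ?thesis using pd_one[of j] by (simp add: pd_Suc pderiv_1 del: funpow.simps)
  next
    case (Suc k')
    have "pderiv ([:-c,1:] ^ k) = smult (of_nat k) ([:-c,1:] ^ k')"
      unfolding Suc pderiv_power_Suc by (simp add: pderiv_pCons)
    then have "(pderiv ^^ Suc j) ([:-c,1:] ^ k) = smult (of_nat k) ((pderiv ^^ j) ([:-c,1:] ^ k'))"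
      by (simp add: pd_Suc pd_smult del: funpow.simps)
    then show ?thesis using Suc.IH[of k'] \<open>k = Suc k'\<close>
      by (auto simp del: funpow.simps simp: fact_Suc)
  qed
qed

lemma dvd_vanish:
  fixes p :: "real poly"
  assumes "[:-c,1:] ^ M dvd p" "j < M"
  shows "poly ((pderiv ^^ j) p) c = 0"
  using assms
proof (induction M arbitrary: p j)
  case 0 then show ?case by simp
next
  case (Suc M)
  from Suc.prems(1) obtain r where r: "p = [:-c,1:] ^ Suc M * r" by (rule dvdE)
  show ?case
  proof (cases j)
    case 0 then show ?thesis using r by (simp add: poly_power)
  next
    case (Suc j')
    have "pderiv p = [:-c,1:] ^ M * ([:-c,1:] * pderiv r + r * smult (of_nat (Suc M)) (pderiv [:-c,1:]))"
      unfolding r pderiv_mult pderiv_power_Suc by (simp add: algebra_simps)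
    then have "[:-c,1:] ^ M dvd pderiv p" by simp
    then show ?thesis using Suc.IH[of "pderiv p" j'] Suc.prems \<open>j = Suc j'\<close>
      by (simp add: pd_Suc del: funpow.simps)
  qed
qed

lemma vanish_dvd:
  fixes p :: "real poly"
  assumes "\<And>j. j < M \<Longrightarrow> poly ((pderiv ^^ j) p) c = 0"
  shows "[:-c,1:] ^ M dvd p"
  using assms
proof (induction M arbitrary: p)
  case 0 then show ?case by simp
next
  case (Suc M)
  have IH: "[:-c,1:] ^ M dvd pderiv p"
    using Suc.IH[of "pderiv p"] Suc.prems[of "Suc _"] by (simp add: pd_Suc del: funpow.simps)
  have root: "poly p c = 0" using Suc.prems[of 0] by simp
  show ?case
  proof (cases "p = 0")
    case True then show ?thesis by simp
  next
    case False
    show ?thesis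
    proof (cases "pderiv p = 0")
      case True
      then obtain h where "p = [:h:]" using pderiv_iszero by blast
      then show ?thesis using root False by simp
    next
      case False2: False
      have "M \<le> order c (pderiv p)" using IH False2 order_divides by blast
      moreover have "order c p = Suc (order c (pderiv p))" using order_pderiv[OF False root] .
      ultimately show ?thesis using order_divides by (metis Suc_le_mono)
    qed
  qed
qed

lemma prod_dvd_vanish:
  fixes R :: "real poly"
  assumes "finite S" "inj_on a S"
    and "\<And>i j. i \<in> S \<Longrightarrow> j < m i \<Longrightarrow> poly ((pderiv ^^ j) R) (a i) = 0"
    and "R \<noteq> 0"
  shows "(\<Prod>i\<in>S. [:-a i,1:] ^ m i) dvd R"
  using assms
proof (induction S rule: finite_induct)
  case empty then show ?case by simp
next
  case (insert i S)
  then have "(\<Prod>i\<in>S. [:-a i,1:] ^ m i) dvd R" by auto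
  then obtain r where r: "R = (\<Prod>i\<in>S. [:-a i,1:] ^ m i) * r" by (rule dvdE)
  have nz: "(\<Prod>i\<in>S. [:-a i,1:] ^ m i) * r \<noteq> 0" using r insert.prems by simp
  have "poly (\<Prod>i\<in>S. [:-a i,1:] ^ m i) (a i) \<noteq> 0"
    using insert.prems(1) insert.hyps by (auto simp: poly_prod poly_power insert.hyps(1))
  then have o0: "order (a i) (\<Prod>i\<in>S. [:-a i,1:] ^ m i) = 0" by (simp add: order_root)
  have "[:-a i,1:] ^ m i dvd R" by (rule vanish_dvd) (use insert.prems in auto)
  then have "m i \<le> order (a i) R" using insert.prems order_divides by blast
  also have "order (a i) R = order (a i) r" unfolding r order_mult[OF nz] o0 by simp
  finally have "[:-a i,1:] ^ m i dvd r" using order_divides by blast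
  then show ?case unfolding r using insert.hyps by (simp add: mult_dvd_mono mult.commute)
qed

lemma vanish_zero:
  fixes R :: "real poly"
  assumes "finite S" "inj_on a S"
    and "\<And>i j. i \<in> S \<Longrightarrow> j < m i \<Longrightarrow> poly ((pderiv ^^ j) R) (a i) = 0"
    and "degree R < (\<Sum>i\<in>S. m i)"
  shows "R = 0"
proof (rule ccontr)
  assume "R \<noteq> 0"
  from prod_dvd_vanish[OF assms(1-3) this] have "degree (\<Prod>i\<in>S. [:-a i,1:] ^ m i) \<le> degree R"
    using \<open>R \<noteq> 0\<close> dvd_imp_degree_le by blast
  moreover have "degree (\<Prod>i\<in>S. [:-a i,1:] ^ m i) = (\<Sum>i\<in>S. m i)"
    by (subst degree_prod_sum_eq) (auto simp: degree_linear_power)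
  ultimately show False using assms(4) by simp
qed

lemma vd_transform:
  assumes "open U" "y \<in> U" "\<And>z. z \<in> U \<Longrightarrow> h z = F z" "(F has_real_derivative D) (at y)"
  shows "(h has_real_derivative D) (at y)" "vector_derivative h (at y) = D"
proof -
  show *: "(h has_real_derivative D) (at y)"
    using has_field_derivative_transform_within_open[OF assms(4,1,2)] assms(3) by simp
  show "vector_derivative h (at y) = D"
    using * by (simp add: has_real_derivative_iff_has_vector_derivative vector_derivative_at)
qed

lemma nderiv_cong:
  fixes h1 h2 :: "real \<Rightarrow> 'a::real_normed_vector"
  assumes "open U" "\<And>z. z \<in> U \<Longrightarrow> h1 z = h2 z" "y \<in> U"
  shows "nderiv k h1 y = nderiv k h2 y"
  using assms(3)
proof (induction k arbitrary: y)
  case 0 then show ?case using assms by simp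
next
  case (Suc k)
  have "\<And>D. (nderiv k h1 has_vector_derivative D) (at y) \<longleftrightarrow> (nderiv k h2 has_vector_derivative D) (at y)"
    using has_vector_derivative_transform_within_open[OF _ assms(1) Suc.prems] Suc.IH by metis
  then show ?case by (simp add: vector_derivative_def)
qed

lemma nderiv_poly: "nderiv k (poly p) = poly ((pderiv ^^ k) (p :: real poly))"
proof (induction k)
  case 0 then show ?case by simp
next
  case (Suc k)
  show ?case
    by (rule ext) (simp add: Suc, rule vector_derivative_at,
       simp add: has_real_derivative_iff_has_vector_derivative[symmetric])
qed

lemma nderiv_const_one: "nderiv k (\<lambda>_. 1::real) y = (if k = 0 then 1 else 0)"
proof (induction k arbitrary: y)
  case 0 then show ?case by simp
next
  case (Suc k)
  have "nderiv k (\<lambda>_. 1::real) = (\<lambda>_. if k = 0 then 1 else 0)" using Suc by auto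
  then show ?case
    by (simp add: vector_derivative_at has_real_derivative_iff_has_vector_derivative[symmetric])
qed

lemma Suc_choose': "Suc n choose k = (n choose k) + (if k = 0 then 0 else (n choose (k-1)))"
  by (cases k) simp_all

lemma nderiv_mult:
  fixes h1 h2 :: "real \<Rightarrow> real"
  assumes U: "open U"
    and d1: "\<And>k y. y \<in> U \<Longrightarrow> (nderiv k h1 has_real_derivative nderiv (Suc k) h1 y) (at y)"
    and d2: "\<And>k y. y \<in> U \<Longrightarrow> (nderiv k h2 has_real_derivative nderiv (Suc k) h2 y) (at y)"
    and y: "y \<in> U"
  shows "nderiv n (\<lambda>w. h1 w * h2 w) y =
           (\<Sum>i = 0..n. of_nat (n choose i) * nderiv i h1 y * nderiv (n-i) h2 y)"
using y
proof (induction n arbitrary: y)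
  case 0 then show ?case by simp
next
  case (Suc n z)
  have sumeq: "(\<Sum>i = 0..n.
               of_nat (n choose i) * (nderiv (Suc i) h1 z * nderiv (n-i) h2 z + nderiv (Suc (n-i)) h2 z * nderiv i h1 z)) =
            h2 z * nderiv (Suc n) h1 z + (\<Sum>i = 0..n. nderiv i h1 z * (of_nat (Suc n choose i) * nderiv (Suc n - i) h2 z))"
    apply (simp add: Suc_choose' algebra_simps sum.distrib del: nderiv.simps(2))
    apply (subst (4) sum_Suc_reindex)
    apply (auto simp: algebra_simps Suc_diff_le intro: sum.cong simp del: nderiv.simps(2))
    done
  have D: "((\<lambda>w. (\<Sum>i = 0..n. of_nat (n choose i) * nderiv i h1 w * nderiv (n-i) h2 w)) has_real_derivative
     (\<Sum>i = 0..n. of_nat (n choose i) * nderiv (Suc i) h1 z * nderiv (n-i) h2 z + nderiv (Suc (n-i)) h2 z * (of_nat (n choose i) * nderiv i h1 z))) (at z)"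
    by (intro DERIV_sum DERIV_mult DERIV_cmult d1 d2 Suc.prems)
  have "(nderiv n (\<lambda>w. h1 w * h2 w) has_real_derivative
         (\<Sum>i = 0..Suc n. (Suc n choose i) * nderiv i h1 z * nderiv (Suc n - i) h2 z))
        (at z)"
  proof (rule has_field_derivative_transform_within_open[OF _ U Suc.prems])
    show "\<And>y. y \<in> U \<Longrightarrow> (\<Sum>i = 0..n. of_nat (n choose i) * nderiv i h1 y * nderiv (n-i) h2 y) = nderiv n (\<lambda>w. h1 w * h2 w) y"
      using Suc.IH by simp
    have "(\<Sum>i = 0..n. of_nat (n choose i) * nderiv (Suc i) h1 z * nderiv (n-i) h2 z + nderiv (Suc (n-i)) h2 z * (of_nat (n choose i) * nderiv i h1 z))
       = (\<Sum>i = 0..Suc n. (Suc n choose i) * nderiv i h1 z * nderiv (Suc n - i) h2 z)"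
      using sumeq by (simp add: sum.atLeast0_atMost_Suc_shift algebra_simps del: nderiv.simps(2))
    then show "((\<lambda>w. (\<Sum>i = 0..n. of_nat (n choose i) * nderiv i h1 w * nderiv (n-i) h2 w)) has_real_derivative
         (\<Sum>i = 0..Suc n. (Suc n choose i) * nderiv i h1 z * nderiv (Suc n - i) h2 z)) (at z)"
      using D by simp
  qed
  then have "vector_derivative (nderiv n (\<lambda>w. h1 w * h2 w)) (at z) = 
     (\<Sum>i = 0..Suc n. (Suc n choose i) * nderiv i h1 z * nderiv (Suc n - i) h2 z)"
    by (intro vector_derivative_at) (simp add: has_real_derivative_iff_has_vector_derivative[symmetric] del: nderiv.simps(2))
  then show ?case by simp
qed

lemma nderiv_inv_poly:
  fixes G :: "real poly"
  assumes U: "open U" and G: "\<And>y. y \<in> U \<Longrightarrow> poly G y \<noteq> 0"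
  shows "\<exists>P. \<forall>y\<in>U. nderiv k (\<lambda>y. inverse (poly G y)) y = poly P y / poly G y ^ Suc k"
proof (induction k)
  case 0 show ?case by (rule exI[of _ 1]) (simp add: divide_inverse)
next
  case (Suc k)
  then obtain P where P: "\<And>y. y \<in> U \<Longrightarrow> nderiv k (\<lambda>y. inverse (poly G y)) y = poly P y / poly G y ^ Suc k"
    by blast
  define P' where "P' = pderiv P * G - smult (of_nat (Suc k)) (P * pderiv G)"
  show ?case
  proof (intro exI ballI)
    fix y assume y: "y \<in> U"
    have D: "((\<lambda>w. poly P w / poly G w ^ Suc k) has_real_derivative
        (poly (pderiv P) y * poly G y ^ Suc k - poly P y * (of_nat (Suc k) * poly G y ^ k * poly (pderiv G) y))
          / (poly G y ^ Suc k * poly G y ^ Suc k)) (at y)"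
      using DERIV_divide[OF poly_DERIV[of P y] DERIV_power_Suc[OF poly_DERIV[of G y], of k]] G[OF y]
      by (simp add: algebra_simps)
    have "nderiv (Suc k) (\<lambda>y. inverse (poly G y)) y = 
        (poly (pderiv P) y * poly G y ^ Suc k - poly P y * (of_nat (Suc k) * poly G y ^ k * poly (pderiv G) y))
          / (poly G y ^ Suc k * poly G y ^ Suc k)"
      using vd_transform(2)[OF U y _ D] P by simp
    also have "\<dots> = poly P' y / poly G y ^ Suc (Suc k)"
      using G[OF y] unfolding P'_def by (simp add: field_simps power_Suc)
    finally show "nderiv (Suc k) (\<lambda>y. inverse (poly G y)) y = poly P' y / poly G y ^ Suc (Suc k)" .
  qed
qed

lemma nderiv_inv_poly_deriv:
  fixes G :: "real poly"
  assumes U: "open U" and G: "\<And>y. y \<in> U \<Longrightarrow> poly G y \<noteq> 0" and y: "y \<in> U"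
  shows "(nderiv k (\<lambda>y. inverse (poly G y)) has_real_derivative
           nderiv (Suc k) (\<lambda>y. inverse (poly G y)) y) (at y)"
proof -
  obtain P where P: "\<And>y. y \<in> U \<Longrightarrow> nderiv k (\<lambda>y. inverse (poly G y)) y = poly P y / poly G y ^ Suc k"
    using nderiv_inv_poly[OF U G] by blast
  have D: "((\<lambda>w. poly P w / poly G w ^ Suc k) has_real_derivative
        (poly (pderiv P) y * poly G y ^ Suc k - poly P y * (of_nat (Suc k) * poly G y ^ k * poly (pderiv G) y))
          / (poly G y ^ Suc k * poly G y ^ Suc k)) (at y)"
    using DERIV_divide[OF poly_DERIV[of P y] DERIV_power_Suc[OF poly_DERIV[of G y], of k]] G[OF y]
    by (simp add: algebra_simps)
  show ?thesis using vd_transform[OF U y _ D] P by simp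
qed

lemma poly_leibniz:
  "poly ((pderiv ^^ j) (p * q)) (y::real) =
     (\<Sum>i = 0..j. of_nat (j choose i) * poly ((pderiv ^^ i) p) y * poly ((pderiv ^^ (j-i)) q) y)"
proof -
  have "poly ((pderiv ^^ j) (p * q)) y = nderiv j (\<lambda>w. poly p w * poly q w) y"
    by (simp add: nderiv_poly[symmetric] poly_mult[abs_def] del: nderiv.simps)
  also have "\<dots> = (\<Sum>i = 0..j. of_nat (j choose i) * nderiv i (poly p) y * nderiv (j-i) (poly q) y)"
    by (rule nderiv_mult[of UNIV]) (auto simp: nderiv_poly simp del: nderiv.simps)
  finally show ?thesis by (simp add: nderiv_poly del: nderiv.simps)
qed

definition Gp :: "nat \<Rightarrow> (nat \<Rightarrow> real) \<Rightarrow> (nat \<Rightarrow> nat) \<Rightarrow> nat \<Rightarrow> real poly" where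
  "Gp l a m \<alpha> = (\<Prod>i\<in>{1..l}-{\<alpha>}. [:-a i,1:] ^ m i)"

definition dd :: "nat \<Rightarrow> (nat \<Rightarrow> real) \<Rightarrow> (nat \<Rightarrow> nat) \<Rightarrow> nat \<Rightarrow> nat \<Rightarrow> real" where
  "dd l a m \<alpha> k = nderiv k (gfun l a m \<alpha>) (a \<alpha>)"

definition Tp :: "nat \<Rightarrow> (nat \<Rightarrow> real) \<Rightarrow> (nat \<Rightarrow> nat) \<Rightarrow> nat \<Rightarrow> nat \<Rightarrow> real poly" where
  "Tp l a m \<alpha> \<beta> = (\<Sum>k=0..m \<alpha> - 1 - \<beta>. smult (dd l a m \<alpha> k / fact k) ([:-a \<alpha>,1:] ^ k))"

definition HP :: "nat \<Rightarrow> (nat \<Rightarrow> real) \<Rightarrow> (nat \<Rightarrow> nat) \<Rightarrow> nat \<Rightarrow> nat \<Rightarrow> real poly" where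
  "HP l a m \<alpha> \<beta> = smult (1 / fact \<beta>) ([:-a \<alpha>,1:] ^ \<beta> * (Tp l a m \<alpha> \<beta> * Gp l a m \<alpha>))"

lemma gfun_eq: "gfun l a m \<alpha> = (\<lambda>y. inverse (poly (Gp l a m \<alpha>) y))"
  unfolding gfun_def Gp_def
  by (rule ext) (simp add: poly_prod poly_power prod_inversef[symmetric] o_def)

lemma poly_HP: "poly (HP l a m \<alpha> \<beta>) x = Hpoly l a m \<alpha> \<beta> x"
  unfolding HP_def Hpoly_def Tp_def Gp_def
  by (simp add: poly_sum poly_prod poly_power sum_distrib_left sum_distrib_right dd_def power_add
      divide_simps mult_ac)

context
  fixes l :: nat and a :: "nat \<Rightarrow> real" and m :: "nat \<Rightarrow> nat"
  assumes sorted: "\<And>i j. 1 \<le> i \<Longrightarrow> i < j \<Longrightarrow> j \<le> l \<Longrightarrow> a i < a j"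
begin

lemma a_inj: "inj_on a {1..l}"
proof (rule inj_onI)
  fix i j assume "i \<in> {1..l}" "j \<in> {1..l}" "a i = a j"
  then show "i = j" using sorted[of i j] sorted[of j i] by (metis atLeastAtMost_iff less_irrefl nat_neq_iff)
qed

lemma a_neq: "i \<in> {1..l} \<Longrightarrow> j \<in> {1..l} \<Longrightarrow> i \<noteq> j \<Longrightarrow> a i \<noteq> a j"
  using a_inj by (meson inj_on_contraD)

lemma AF:
  assumes \<alpha>: "\<alpha> \<in> {1..l}"
  shows "(\<Sum>k=0..j. of_nat (j choose k) * dd l a m \<alpha> k * poly ((pderiv ^^ (j-k)) (Gp l a m \<alpha>)) (a \<alpha>))
          = (if j = 0 then 1 else 0)"
proof -
  define U where "U = - (a ` ({1..l} - {\<alpha>}))"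
  have U: "open U" unfolding U_def by (intro open_Compl finite_imp_closed) auto
  have aU: "a \<alpha> \<in> U" unfolding U_def using a_neq[OF _ \<alpha>] by fastforce
  have G: "poly (Gp l a m \<alpha>) y \<noteq> 0" if "y \<in> U" for y
    using that unfolding U_def Gp_def by (auto simp: poly_prod poly_power)
  have "nderiv j (\<lambda>w. gfun l a m \<alpha> w * poly (Gp l a m \<alpha>) w) (a \<alpha>) =
     (\<Sum>k=0..j. of_nat (j choose k) * nderiv k (gfun l a m \<alpha>) (a \<alpha>) * nderiv (j-k) (poly (Gp l a m \<alpha>)) (a \<alpha>))"
    unfolding gfun_eq
    by (rule nderiv_mult[OF U nderiv_inv_poly_deriv[OF U G] _ aU])
       (auto simp: nderiv_poly simp del: nderiv.simps)
  moreover have "nderiv j (\<lambda>w. gfun l a m \<alpha> w * poly (Gp l a m \<alpha>) w) (a \<alpha>) = nderiv j (\<lambda>_. 1::real) (a \<alpha>)"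
    by (rule nderiv_cong[OF U _ aU]) (simp add: gfun_eq G)
  ultimately show ?thesis by (simp add: nderiv_const_one dd_def nderiv_poly del: nderiv.simps)
qed

lemma TpD:
  assumes "i \<le> m \<alpha> - 1 - \<beta>"
  shows "poly ((pderiv ^^ i) (Tp l a m \<alpha> \<beta>)) (a \<alpha>) = dd l a m \<alpha> i"
proof -
  have "poly ((pderiv ^^ i) (Tp l a m \<alpha> \<beta>)) (a \<alpha>) =
     (\<Sum>k=0..m \<alpha> - 1 - \<beta>. dd l a m \<alpha> k / fact k * (if i \<le> k then fact k / fact (k - i) * (a \<alpha> - a \<alpha>) ^ (k - i) else 0))"
    unfolding Tp_def by (simp add: pd_sum pd_smult poly_sum pd_lin_power del: funpow.simps)
  also have "\<dots> = (\<Sum>k=0..m \<alpha> - 1 - \<beta>. if k = i then dd l a m \<alpha> i else 0)"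
    by (rule sum.cong) auto
  also have "\<dots> = dd l a m \<alpha> i" using assms by simp
  finally show ?thesis .
qed

lemma LT:
  assumes "\<alpha> \<in> {1..l}" "j < m \<alpha> - \<beta>"
  shows "poly ((pderiv ^^ j) (Tp l a m \<alpha> \<beta> * Gp l a m \<alpha>)) (a \<alpha>) = (if j = 0 then 1 else 0)"
proof -
  have "poly ((pderiv ^^ j) (Tp l a m \<alpha> \<beta> * Gp l a m \<alpha>)) (a \<alpha>) =
     (\<Sum>k=0..j. of_nat (j choose k) * dd l a m \<alpha> k * poly ((pderiv ^^ (j-k)) (Gp l a m \<alpha>)) (a \<alpha>))"
    unfolding poly_leibniz using assms(2) by (intro sum.cong refl) (simp add: TpD del: funpow.simps)
  also have "\<dots> = (if j = 0 then 1 else 0)" by (rule AF[OF assms(1)])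
  finally show ?thesis .
qed

lemma HD:
  assumes \<alpha>: "\<alpha> \<in> {1..l}" and i: "i \<in> {1..l}" and \<beta>: "\<beta> < m \<alpha>" and j: "j < m i"
  shows "poly ((pderiv ^^ j) (HP l a m \<alpha> \<beta>)) (a i) = (if i = \<alpha> \<and> j = \<beta> then 1 else 0)"
proof (cases "i = \<alpha>")
  case False
  have "[:-a i,1:] ^ m i dvd Gp l a m \<alpha>" unfolding Gp_def using False i by (intro dvd_prodI) auto
  then have "[:-a i,1:] ^ m i dvd HP l a m \<alpha> \<beta>" unfolding HP_def
    by (rule dvd_smult[OF dvd_mult[OF dvd_mult]])
  then show ?thesis using dvd_vanish j False by auto
next
  case True
  define q where "q = [:-a \<alpha>,1:]"
  have "q ^ (m \<alpha> - \<beta>) dvd (Tp l a m \<alpha> \<beta> * Gp l a m \<alpha> - 1)"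
    unfolding q_def
  proof (rule vanish_dvd)
    fix j assume "j < m \<alpha> - \<beta>"
    then show "poly ((pderiv ^^ j) (Tp l a m \<alpha> \<beta> * Gp l a m \<alpha> - 1)) (a \<alpha>) = 0"
    proof -
      have e: "poly ((pderiv ^^ j) 1) (a \<alpha>) = (if j=0 then 1 else 0)"
        by (cases j) (simp_all add: pd_one del: funpow.simps)
      show ?thesis by (simp only: pd_diff poly_diff LT[OF \<alpha> \<open>j < m \<alpha> - \<beta>\<close>] e)
    qed
  qed
  then obtain r where r0: "Tp l a m \<alpha> \<beta> * Gp l a m \<alpha> - 1 = q ^ (m \<alpha> - \<beta>) * r"
    by (rule dvdE)
  then have r: "Tp l a m \<alpha> \<beta> * Gp l a m \<alpha> = q ^ (m \<alpha> - \<beta>) * r + 1"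
    by (simp only: diff_eq_eq)
  have qq: "q ^ \<beta> * q ^ (m \<alpha> - \<beta>) = q ^ m \<alpha>"
    using \<beta> by (simp only: power_add[symmetric]) simp
  have "q ^ \<beta> * (Tp l a m \<alpha> \<beta> * Gp l a m \<alpha>) = (q ^ \<beta> * q ^ (m \<alpha> - \<beta>)) * r + q ^ \<beta>"
    unfolding r by (simp only: distrib_left mult.assoc mult_1_right)
  then have "q ^ \<beta> * (Tp l a m \<alpha> \<beta> * Gp l a m \<alpha>) = q ^ \<beta> + q ^ m \<alpha> * r"
    unfolding qq by (simp only: add.commute)
  then have HPe: "HP l a m \<alpha> \<beta> = smult (1 / fact \<beta>) (q ^ \<beta> + q ^ m \<alpha> * r)"
    unfolding HP_def q_def by simp
  have z: "poly ((pderiv ^^ j) (q ^ m \<alpha> * r)) (a \<alpha>) = 0"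
    unfolding q_def by (rule dvd_vanish) (use j True in auto)
  have "poly ((pderiv ^^ j) (HP l a m \<alpha> \<beta>)) (a i) =
      1 / fact \<beta> * ((if j \<le> \<beta> then fact \<beta> / fact (\<beta> - j) * (a \<alpha> - a \<alpha>) ^ (\<beta> - j) else 0) + 0)"
    unfolding HPe True pd_smult pd_add poly_smult poly_add q_def z[unfolded q_def] pd_lin_power ..
  also have "\<dots> = (if i = \<alpha> \<and> j = \<beta> then 1 else 0)"
    using True by auto
  finally show ?thesis .
qed

lemma deg_Gp:
  assumes "\<alpha> \<in> {1..l}"
  shows "degree (Gp l a m \<alpha>) = (\<Sum>i\<in>{1..l}. m i) - m \<alpha>"
proof -
  have "degree (Gp l a m \<alpha>) = (\<Sum>i\<in>{1..l}-{\<alpha>}. m i)"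
    unfolding Gp_def by (subst degree_prod_sum_eq) (auto simp: degree_linear_power)
  also have "(\<Sum>i\<in>{1..l}. m i) = m \<alpha> + (\<Sum>i\<in>{1..l}-{\<alpha>}. m i)"
    using assms by (simp add: sum.remove)
  ultimately show ?thesis by simp
qed

lemma deg_Tp: "degree (Tp l a m \<alpha> \<beta>) \<le> m \<alpha> - 1 - \<beta>"
  unfolding Tp_def
proof (rule degree_sum_le)
  fix k assume "k \<in> {0..m \<alpha> - 1 - \<beta>}"
  then show "degree (smult (dd l a m \<alpha> k / fact k) ([:-a \<alpha>,1:] ^ k)) \<le> m \<alpha> - 1 - \<beta>"
    using degree_smult_le[of "dd l a m \<alpha> k / fact k" "[:-a \<alpha>,1:] ^ k"]
    by (simp add: degree_linear_power)
qed simp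

lemma deg_HP:
  assumes "\<alpha> \<in> {1..l}" "\<beta> < m \<alpha>"
  shows "degree (HP l a m \<alpha> \<beta>) \<le> (\<Sum>i\<in>{1..l}. m i) - 1"
proof -
  have le: "m \<alpha> \<le> (\<Sum>i\<in>{1..l}. m i)" using assms(1) by (intro member_le_sum) auto
  have "degree (HP l a m \<alpha> \<beta>) \<le> degree ([:-a \<alpha>,1:] ^ \<beta> * (Tp l a m \<alpha> \<beta> * Gp l a m \<alpha>))"
    unfolding HP_def by (rule degree_smult_le)
  also have "\<dots> \<le> \<beta> + (degree (Tp l a m \<alpha> \<beta>) + degree (Gp l a m \<alpha>))"
    using degree_mult_le[of "[:-a \<alpha>,1:] ^ \<beta>" "Tp l a m \<alpha> \<beta> * Gp l a m \<alpha>"]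
      degree_mult_le[of "Tp l a m \<alpha> \<beta>" "Gp l a m \<alpha>"]
    by (simp add: degree_linear_power)
  also have "\<dots> \<le> \<beta> + ((m \<alpha> - 1 - \<beta>) + ((\<Sum>i\<in>{1..l}. m i) - m \<alpha>))"
    using deg_Tp[of \<alpha> \<beta>] deg_Gp[OF assms(1)] by simp
  also have "\<dots> = (\<Sum>i\<in>{1..l}. m i) - 1" using assms(2) le by simp
  finally show ?thesis .
qed

lemma HI:
  fixes p :: "real poly"
  assumes m1: "\<And>i. i \<in> {1..l} \<Longrightarrow> 1 \<le> m i"
    and deg: "degree p < (\<Sum>i\<in>{1..l}. m i)"
  shows "poly p x = (\<Sum>\<alpha>=1..l. \<Sum>\<beta>=0..m \<alpha> - 1. poly ((pderiv ^^ \<beta>) p) (a \<alpha>) * Hpoly l a m \<alpha> \<beta> x)"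
proof -
  let ?N = "\<Sum>i\<in>{1..l}. m i"
  define c where "c \<alpha> \<beta> = poly ((pderiv ^^ \<beta>) p) (a \<alpha>)" for \<alpha> \<beta>
  define S where "S = (\<Sum>\<alpha>=1..l. \<Sum>\<beta>=0..m \<alpha> - 1. smult (c \<alpha> \<beta>) (HP l a m \<alpha> \<beta>))"
  have bet: "\<beta> \<in> {0..m \<alpha> - 1} \<longleftrightarrow> \<beta> < m \<alpha>" if "\<alpha> \<in> {1..l}" for \<alpha> \<beta>
    using m1[OF that] by auto
  have bet2: "\<beta> < m \<alpha>" if "Suc 0 \<le> \<alpha>" "\<alpha> \<le> l" "\<beta> \<le> m \<alpha> - Suc 0" for \<alpha> \<beta>
    using m1[of \<alpha>] that by auto
  have degS: "degree S \<le> ?N - 1"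
    unfolding S_def
    by (intro degree_sum_le finite_atLeastAtMost order_trans[OF degree_smult_le] deg_HP)
       (auto intro: bet2)
  have "p - S = 0"
  proof (rule vanish_zero[of "{1..l}" a m])
    have "degree (p - S) \<le> ?N - 1" by (rule degree_diff_le) (use degS deg in auto)
    then show "degree (p - S) < ?N" using deg by linarith
    show "inj_on a {1..l}" by (rule a_inj)
    fix i j assume i: "i \<in> {1..l}" and j: "j < m i"
    have "poly ((pderiv ^^ j) S) (a i) =
        (\<Sum>\<alpha>=1..l. \<Sum>\<beta>=0..m \<alpha> - 1. c \<alpha> \<beta> * (if i = \<alpha> \<and> j = \<beta> then 1 else 0))"
      unfolding S_def pd_sum pd_smult poly_sum poly_smult
      by (intro sum.cong refl) (simp add: HD[OF _ i _ j] bet2 del: funpow.simps)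
    also have "\<dots> = (\<Sum>\<alpha>=1..l. if \<alpha> = i then c i j else 0)"
    proof (rule sum.cong[OF refl])
      fix \<alpha> assume "\<alpha> \<in> {1..l}"
      show "(\<Sum>\<beta>=0..m \<alpha> - 1. c \<alpha> \<beta> * (if i = \<alpha> \<and> j = \<beta> then 1 else 0)) = (if \<alpha> = i then c i j else 0)"
      proof (cases "\<alpha> = i")
        case True
        have "(\<Sum>\<beta>=0..m \<alpha> - 1. c \<alpha> \<beta> * (if i = \<alpha> \<and> j = \<beta> then 1 else 0)) =
              (\<Sum>\<beta>=0..m \<alpha> - 1. if \<beta> = j then c i j else 0)"
          using True by (intro sum.cong refl) auto
        also have "\<dots> = c i j" using j True by simp
        finally show ?thesis using True by simp
      qed auto
    qed
    also have "\<dots> = c i j" using i by simp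
    finally show "poly ((pderiv ^^ j) (p - S)) (a i) = 0"
      by (simp add: pd_diff c_def del: funpow.simps)
  qed simp
  then have "p = S" by simp
  then have "poly p x = poly S x" by (simp only:)
  also have "poly S x = (\<Sum>\<alpha>=1..l. \<Sum>\<beta>=0..m \<alpha> - 1. poly ((pderiv ^^ \<beta>) p) (a \<alpha>) * Hpoly l a m \<alpha> \<beta> x)"
    unfolding S_def poly_sum poly_smult poly_HP c_def ..
  finally show ?thesis .
qed

end

lemma DS:
  fixes F :: "nat \<Rightarrow> real \<Rightarrow> 'a::real_normed_vector"
  assumes "1 \<le> p" "\<And>i. i < p \<Longrightarrow> (F i has_vector_derivative F (Suc i) t) (at t within T)"
  shows "((\<lambda>u. \<Sum>i<p. ((y-u)^i / fact i) *\<^sub>R F i u) has_vector_derivative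
           ((y-t)^(p-1) / fact (p-1)) *\<^sub>R F p t) (at t within T)"
  using assms
proof (induction p rule: nat_induct_at_least)
  case base
  then show ?case using base.prems[of 0] by simp
next
  case (Suc p)
  have IH: "((\<lambda>u. \<Sum>i<p. ((y-u)^i / fact i) *\<^sub>R F i u) has_vector_derivative
           ((y-t)^(p-1) / fact (p-1)) *\<^sub>R F p t) (at t within T)"
    using Suc.IH Suc.prems by auto
  have fd: "((\<lambda>u. (y-u)^p / fact p) has_real_derivative - ((y-t)^(p-1) / fact (p-1))) (at t within T)"
  proof -
    have "((\<lambda>u. (y-u)^p / fact p) has_real_derivative (of_nat p * (y-t)^(p-1) * (-1)) / fact p) (at t within T)"
      by (auto intro!: derivative_eq_intros)
    moreover have "(of_nat p * (y-t)^(p-1) * (-1)) / fact p = - ((y-t)^(p-1) / fact (p-1))"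
      using Suc(1) by (cases p) (simp_all add: fact_Suc del: of_nat_Suc)
    ultimately show ?thesis by simp
  qed
  have "((\<lambda>u. (\<Sum>i<p. ((y-u)^i / fact i) *\<^sub>R F i u) + ((y-u)^p / fact p) *\<^sub>R F p u) has_vector_derivative
      ((y-t)^(p-1) / fact (p-1)) *\<^sub>R F p t + (((y-t)^p / fact p) *\<^sub>R F (Suc p) t + (- ((y-t)^(p-1) / fact (p-1))) *\<^sub>R F p t))
      (at t within T)"
    by (intro has_vector_derivative_add IH has_vector_derivative_scaleR fd Suc.prems) simp
  then show ?case by (simp add: algebra_simps)
qed

lemma taylor_oint:
  fixes F :: "nat \<Rightarrow> real \<Rightarrow> complex"
  assumes p: "1 \<le> p"
    and d: "\<And>i t. i < p \<Longrightarrow> t \<in> {min x y..max x y} \<Longrightarrow> (F i has_vector_derivative F (Suc i) t) (at t)"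
  shows "F 0 y + oint y x (\<lambda>t. F p t * of_real ((y-t)^(p-1) / fact (p-1)))
          = (\<Sum>i<p. of_real ((y-x)^i / fact i) * F i x)"
proof -
  define S where "S u = (\<Sum>i<p. ((y-u)^i / fact i) *\<^sub>R F i u)" for u
  define g where "g t = F p t * of_real ((y-t)^(p-1) / fact (p-1))" for t
  have Sy: "S y = F 0 y"
  proof -
    have "S y = ((y-y)^0 / fact 0) *\<^sub>R F 0 y + (\<Sum>i\<in>{..<p} - {0}. ((y-y)^i / fact i) *\<^sub>R F i y)"
      unfolding S_def by (rule sum.remove) (use p in auto)
    also have "(\<Sum>i\<in>{..<p} - {0}. ((y-y)^i / fact i) *\<^sub>R F i y) = 0"
      by (intro sum.neutral) auto
    finally show ?thesis by simp
  qed
  have der: "(S has_vector_derivative g t) (at t within {lo..hi})"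
    if "t \<in> {lo..hi}" "{lo..hi} \<subseteq> {min x y..max x y}" for t lo hi
  proof -
    have "(S has_vector_derivative ((y-t)^(p-1) / fact (p-1)) *\<^sub>R F p t) (at t within {lo..hi})"
    proof -
      have "(F i has_vector_derivative F (Suc i) t) (at t within {lo..hi})" if "i < p" for i
      proof -
        have "t \<in> {min x y..max x y}" using \<open>t \<in> {lo..hi}\<close> \<open>{lo..hi} \<subseteq> _\<close> by blast
        then show ?thesis using has_vector_derivative_at_within d \<open>i < p\<close> by blast
      qed
      then show ?thesis unfolding S_def by (rule DS[OF p])
    qed
    then show ?thesis unfolding g_def by (simp add: scaleR_conv_of_real mult.commute)
  qed
  have "oint y x g = S x - S y"
  proof (cases "y \<le> x")
    case True
    have "(g has_integral S x - S y) {y..x}"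
      by (rule fundamental_theorem_of_calculus[OF True der]) (use True in auto)
    then show ?thesis using True unfolding oint_def by (simp add: integral_unique)
  next
    case False
    have "(g has_integral S y - S x) {x..y}"
      by (rule fundamental_theorem_of_calculus[OF _ der]) (use False in auto)
    then show ?thesis using False unfolding oint_def by (simp add: integral_unique)
  qed
  then have "F 0 y + oint y x g = S x" using Sy by simp
  moreover have "(\<lambda>t. F p t * of_real ((y-t)^(p-1) / fact (p-1))) = g" by (simp add: g_def fun_eq_iff)
  moreover have "S x = (\<Sum>i<p. of_real ((y-x)^i / fact i) * F i x)"
    unfolding S_def by (simp only: scaleR_conv_of_real)
  ultimately show ?thesis by simp
qed

lemma shift_sum:
  fixes h :: "nat \<Rightarrow> 'a::comm_monoid_add"
  assumes "\<beta> \<le> n"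
  shows "(\<Sum>i<n-\<beta>. h (\<beta> + i)) = (\<Sum>j<n. if \<beta> \<le> j then h j else 0)"
proof -
  have "(\<Sum>j<n. if \<beta> \<le> j then h j else 0) = (\<Sum>j\<in>{\<beta>..<n}. h j)"
    by (simp add: sum.If_cases) (rule sum.cong, auto)
  also have "\<dots> = (\<Sum>i<n-\<beta>. h (\<beta> + i))"
  proof (rule sum.reindex_bij_witness[of _ "\<lambda>i. \<beta> + i" "\<lambda>j. j - \<beta>"])
  qed (use assms in auto)
  finally show ?thesis by simp
qed

theorem mainTheorem5:
  fixes l n :: nat and I :: "real set" and a :: "nat \<Rightarrow> real" and m :: "nat \<Rightarrow> nat"
    and f :: "real \<Rightarrow> complex" and x :: real
  assumes "open I" and "is_interval I"
    and "1 \<le> l"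
    and "\<And>i j. 1 \<le> i \<Longrightarrow> i < j \<Longrightarrow> j \<le> l \<Longrightarrow> a i < a j"
    and "\<And>i. 1 \<le> i \<Longrightarrow> i \<le> l \<Longrightarrow> a i \<in> I"
    and "\<And>i. 1 \<le> i \<Longrightarrow> i \<le> l \<Longrightarrow> 1 \<le> m i"
    and "(\<Sum>i=1..l. m i) = n"
    and "Cn n I f"
    and "x \<in> I"
  shows "f x = (\<Sum>\<alpha>=1..l. \<Sum>\<beta>=0..m \<alpha> - 1.
            (nderiv \<beta> f (a \<alpha>)
             + oint (a \<alpha>) x (\<lambda>t. nderiv n f t
                 * of_real ((a \<alpha> - t) ^ (n - 1 - \<beta>) / fact (n - 1 - \<beta>))))
            * of_real (Hpoly l a m \<alpha> \<beta> x))"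
proof -
  note sorted = assms(4)
  define D where "D j = nderiv j f x" for j
  define cc where "cc j \<alpha> \<beta> = poly ((pderiv ^^ \<beta>) ([:-x,1:] ^ j)) (a \<alpha>)" for j \<alpha> \<beta>
  have m1: "\<And>i. i \<in> {1..l} \<Longrightarrow> 1 \<le> m i" using assms(6) by auto
  have mle: "m \<alpha> \<le> n" if "\<alpha> \<in> {1..l}" for \<alpha>
  proof -
    have "m \<alpha> \<le> (\<Sum>i=1..l. m i)" by (rule member_le_sum) (use that in auto)
    then show ?thesis using assms(7) by simp
  qed
  have n1: "1 \<le> n" using mle[of 1] m1[of 1] assms(3) by fastforce
  have intv: "t \<in> I" if "t \<in> {min x y..max x y}" "y \<in> I" for t y
  proof -
    have mm: "min x y \<in> I" "max x y \<in> I" using that(2) assms(9) by (auto simp: min_def max_def)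
    have "min x y \<le> t" "t \<le> max x y" using that(1) by auto
    then show ?thesis using assms(2)[unfolded is_interval_1] mm by blast
  qed
  have Cn: "\<And>k t. k < n \<Longrightarrow> t \<in> I \<Longrightarrow> (nderiv k f has_vector_derivative nderiv (Suc k) f t) (at t)"
    using assms(8) unfolding Cn_def by (simp add: vector_derivative_works[symmetric])
  have A: "nderiv \<beta> f (a \<alpha>) + oint (a \<alpha>) x (\<lambda>t. nderiv n f t
                 * of_real ((a \<alpha> - t) ^ (n - 1 - \<beta>) / fact (n - 1 - \<beta>)))
        = (\<Sum>j<n. D j / fact j * of_real (cc j \<alpha> \<beta>))"
    if \<alpha>: "\<alpha> \<in> {1..l}" and \<beta>: "\<beta> < m \<alpha>" for \<alpha> \<beta>
  proof -
    have \<beta>n: "\<beta> < n" using \<beta> mle[OF \<alpha>] by simp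
    have aI: "a \<alpha> \<in> I" using \<alpha> assms(5) by auto
    have "nderiv (\<beta> + 0) f (a \<alpha>) + oint (a \<alpha>) x (\<lambda>t. nderiv (\<beta> + (n - \<beta>)) f t
                 * of_real ((a \<alpha> - t) ^ (n - \<beta> - 1) / fact (n - \<beta> - 1)))
        = (\<Sum>i<n - \<beta>. of_real ((a \<alpha> - x)^i / fact i) * nderiv (\<beta> + i) f x)"
    proof (rule taylor_oint[where F = "\<lambda>i. nderiv (\<beta> + i) f"])
      show "1 \<le> n - \<beta>" using \<beta>n by simp
      fix i t assume "i < n - \<beta>" "t \<in> {min x (a \<alpha>)..max x (a \<alpha>)}"
      then show "(nderiv (\<beta> + i) f has_vector_derivative nderiv (\<beta> + Suc i) f t) (at t)"
        using Cn[of "\<beta> + i" t] intv[OF _ aI] by simp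
    qed
    also have "\<dots> = (\<Sum>j<n. if \<beta> \<le> j then of_real ((a \<alpha> - x)^(j - \<beta>) / fact (j - \<beta>)) * D j else 0)"
      using shift_sum[of \<beta> n "\<lambda>j. of_real ((a \<alpha> - x)^(j - \<beta>) / fact (j - \<beta>)) * D j"] \<beta>n
      by (simp add: D_def)
    also have "\<dots> = (\<Sum>j<n. D j / fact j * of_real (cc j \<alpha> \<beta>))"
      unfolding cc_def pd_lin_power by (intro sum.cong refl) (simp add: field_simps)
    finally show ?thesis using \<beta>n by (simp add: add.commute)
  qed
  have B: "(\<Sum>\<alpha>=1..l. \<Sum>\<beta>=0..m \<alpha> - 1. cc j \<alpha> \<beta> * Hpoly l a m \<alpha> \<beta> x) = (if j = 0 then 1 else 0)"
    if "j < n" for j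
  proof -
    have "poly ([:-x,1:] ^ j) x = (\<Sum>\<alpha>=1..l. \<Sum>\<beta>=0..m \<alpha> - 1. cc j \<alpha> \<beta> * Hpoly l a m \<alpha> \<beta> x)"
      unfolding cc_def
      by (rule HI[OF sorted m1]) (use that assms(7) in \<open>auto simp: degree_linear_power\<close>)
    then show ?thesis by (cases j) (simp_all add: poly_power)
  qed
  have bet: "\<beta> < m \<alpha>" if "\<alpha> \<in> {1..l}" "\<beta> \<in> {0..m \<alpha> - 1}" for \<alpha> \<beta>
    using m1[OF that(1)] that(2) by auto
  have "(\<Sum>\<alpha>=1..l. \<Sum>\<beta>=0..m \<alpha> - 1.
            (nderiv \<beta> f (a \<alpha>)
             + oint (a \<alpha>) x (\<lambda>t. nderiv n f t
                 * of_real ((a \<alpha> - t) ^ (n - 1 - \<beta>) / fact (n - 1 - \<beta>))))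
            * of_real (Hpoly l a m \<alpha> \<beta> x))
     = (\<Sum>\<alpha>=1..l. \<Sum>\<beta>=0..m \<alpha> - 1. (\<Sum>j<n. D j / fact j * of_real (cc j \<alpha> \<beta>)) * of_real (Hpoly l a m \<alpha> \<beta> x))"
  proof (intro sum.cong refl)
    fix \<alpha> \<beta> assume h: "\<alpha> \<in> {1..l}" "\<beta> \<in> {0..m \<alpha> - 1}"
    show "(nderiv \<beta> f (a \<alpha>)
             + oint (a \<alpha>) x (\<lambda>t. nderiv n f t
                 * of_real ((a \<alpha> - t) ^ (n - 1 - \<beta>) / fact (n - 1 - \<beta>))))
            * of_real (Hpoly l a m \<alpha> \<beta> x) = (\<Sum>j<n. D j / fact j * of_real (cc j \<alpha> \<beta>)) * of_real (Hpoly l a m \<alpha> \<beta> x)"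
      by (simp only: A[OF h(1) bet[OF h]])
  qed
  also have "\<dots> = (\<Sum>\<alpha>=1..l. \<Sum>\<beta>=0..m \<alpha> - 1. \<Sum>j<n. D j / fact j * of_real (cc j \<alpha> \<beta> * Hpoly l a m \<alpha> \<beta> x))"
    by (simp add: sum_distrib_right mult.assoc)
  also have "\<dots> = (\<Sum>j<n. \<Sum>\<alpha>=1..l. \<Sum>\<beta>=0..m \<alpha> - 1. D j / fact j * of_real (cc j \<alpha> \<beta> * Hpoly l a m \<alpha> \<beta> x))"
    by (subst sum.swap) (simp add: sum.swap[of _ "{..<n}"])
  also have "\<dots> = (\<Sum>j<n. D j / fact j * of_real (\<Sum>\<alpha>=1..l. \<Sum>\<beta>=0..m \<alpha> - 1. cc j \<alpha> \<beta> * Hpoly l a m \<alpha> \<beta> x))"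
    by (simp add: sum_distrib_left of_real_sum)
  also have "\<dots> = (\<Sum>j<n. if j = 0 then D 0 else 0)"
    by (intro sum.cong refl) (simp only: lessThan_iff B, simp)
  also have "\<dots> = D 0" using n1 by simp
  finally show ?thesis by (simp add: D_def)
qed

end
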